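(* Let $\ell\ge1$ and let $G_{\mathcal P}$ be the dual-entry path on vertices $\{1,2,3,\dots,\ell+2\}$, with entry vertices $1,2$ taken as leaders and inner vertices $3,\dots,\ell+2$ (in path order) taken as followers: its edge set is $\{(1,3),(2,3)\}$ if $\ell=1$, and $\{(1,3),(2,\ell+2)\}\cup\{(r,r+1),(r+1,r):3\le r<\ell+2\}$ if $\ell\ge2$. Let $(\tilde g,\theta)$ be a nominal configuration on these vertices. Then: (1) $\hat M_{ff}$ is non-singular if and only if $\tilde p^x_{uv,\theta}\tilde p^y_{uv,\theta}\tilde\phi_{uv}\ne0$ for $\{u,v\}=\{1,2\}$ and for every $\{u,v\}=\{r,r+1\}$ with $3\le r<\ell+2$; (2) if the condition in (1) holds and moreover $\tilde p^x_{1l,\theta}\tilde p^y_{1l,\theta}\tilde\phi_{1l}\ne0$ for every $l=4,\dots,\ell+2$, then there exists a diagonal matrix $D$ such that every eigenvalue of $D\hat M_{ff}$ has positive real part.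
   Context: $(a,b)$ in the edge set means agent $b$ measures agent $a$. $R(\theta)$ is the $2\times2$ rotation by $\theta$, $\Theta=\mathrm{diag}(R(\theta),1)$. $\tilde g_i=[\tilde p_i^\top,\tilde\phi_i]^\top\in\mathbb R^3$, $\Theta^\top\tilde g_i=[\tilde p^x_{i,\theta},\tilde p^y_{i,\theta},\tilde\phi_i]^\top$; $\tilde p^x_{uv,\theta}=\tilde p^x_{u,\theta}-\tilde p^x_{v,\theta}$, similarly $y$, $\tilde\phi_{uv}=\tilde\phi_u-\tilde\phi_v$; $w_{uv}=\mathrm{diag}(\tilde p^x_{uv,\theta},\tilde p^y_{uv,\theta},\tilde\phi_{uv})$. With vertex set $V=\{1,\dots,\ell+2\}$ and edge set $E$, $C=\{(i,j,k)\in V^3:(i,k),(j,k)\in E,\ i<j\}$, and $\hat M\in\mathbb R^{3(\ell+2)\times3(\ell+2)}$ is defined by: for $x=[x_1^\top,\dots,x_{\ell+2}^\top]^\top$, the $k$-th $3$-block of $\hat Mx$ is $\sum_{(i,j,k)\in C}(w_{jk}(x_i-x_k)+w_{ki}(x_j-x_k))$. $\hat M_{ff}\in\mathbb R^{3\ell\times3\ell}$ is the submatrix of $\hat M$ with rows and columns indexed by the followers $3,\dots,\ell+2$. *)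

theory Defs
  imports "Jordan_Normal_Form.Jordan_Normal_Form"
begin

text \<open>Vertices are the naturals 1..N. A configuration is given by the component functions
  px, py, phi of g_i = [p_i^T, phi_i]^T together with the angle theta.
  Stacked vectors in R^(3N): vertex k, component a (a<3) sits at index 3*(k-1)+a.\<close>

definition rot_px :: "real \<Rightarrow> (nat \<Rightarrow> real) \<Rightarrow> (nat \<Rightarrow> real) \<Rightarrow> nat \<Rightarrow> real" where
  "rot_px \<theta> px py i = cos \<theta> * px i + sin \<theta> * py i"

definition rot_py :: "real \<Rightarrow> (nat \<Rightarrow> real) \<Rightarrow> (nat \<Rightarrow> real) \<Rightarrow> nat \<Rightarrow> real" where
  "rot_py \<theta> px py i = - sin \<theta> * px i + cos \<theta> * py i"

text \<open>Diagonal entry a (a = 0,1,2) of w_uv = diag(p^x_{uv,theta}, p^y_{uv,theta}, phi_uv).\<close>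
definition wdiag :: "real \<Rightarrow> (nat \<Rightarrow> real) \<Rightarrow> (nat \<Rightarrow> real) \<Rightarrow> (nat \<Rightarrow> real) \<Rightarrow> nat \<Rightarrow> nat \<Rightarrow> nat \<Rightarrow> real" where
  "wdiag \<theta> px py phi u v a =
     (if a = 0 then rot_px \<theta> px py u - rot_px \<theta> px py v
      else if a = 1 then rot_py \<theta> px py u - rot_py \<theta> px py v
      else phi u - phi v)"

definition wprod :: "real \<Rightarrow> (nat \<Rightarrow> real) \<Rightarrow> (nat \<Rightarrow> real) \<Rightarrow> (nat \<Rightarrow> real) \<Rightarrow> nat \<Rightarrow> nat \<Rightarrow> real" where
  "wprod \<theta> px py phi u v =
     (rot_px \<theta> px py u - rot_px \<theta> px py v) * (rot_py \<theta> px py u - rot_py \<theta> px py v) * (phi u - phi v)"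

definition triples :: "nat \<Rightarrow> (nat \<times> nat) set \<Rightarrow> (nat \<times> nat \<times> nat) set" where
  "triples N E = {(i,j,k). i \<in> {1..N} \<and> j \<in> {1..N} \<and> k \<in> {1..N} \<and> (i,k) \<in> E \<and> (j,k) \<in> E \<and> i < j}"

definition blk :: "real vec \<Rightarrow> nat \<Rightarrow> nat \<Rightarrow> real" where
  "blk x k a = x $ (3 * (k - 1) + a)"

definition Mhat_apply :: "nat \<Rightarrow> (nat \<times> nat) set \<Rightarrow> real \<Rightarrow> (nat \<Rightarrow> real) \<Rightarrow> (nat \<Rightarrow> real) \<Rightarrow> (nat \<Rightarrow> real) \<Rightarrow> real vec \<Rightarrow> real vec" where
  "Mhat_apply N E \<theta> px py phi x = vec (3 * N) (\<lambda>r.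
     let k = r div 3 + 1; a = r mod 3 in
     (\<Sum>(i,j) \<in> {(i,j). (i,j,k) \<in> triples N E}.
        wdiag \<theta> px py phi j k a * (blk x i a - blk x k a)
      + wdiag \<theta> px py phi k i a * (blk x j a - blk x k a)))"

definition Mhat :: "nat \<Rightarrow> (nat \<times> nat) set \<Rightarrow> real \<Rightarrow> (nat \<Rightarrow> real) \<Rightarrow> (nat \<Rightarrow> real) \<Rightarrow> (nat \<Rightarrow> real) \<Rightarrow> real mat" where
  "Mhat N E \<theta> px py phi =
     mat (3 * N) (3 * N) (\<lambda>(r,c). Mhat_apply N E \<theta> px py phi (unit_vec (3 * N) c) $ r)"

text \<open>Follower block: vertices 3..N, i.e. indices 6..3N-1.\<close>
definition Mff :: "nat \<Rightarrow> (nat \<times> nat) set \<Rightarrow> real \<Rightarrow> (nat \<Rightarrow> real) \<Rightarrow> (nat \<Rightarrow> real) \<Rightarrow> (nat \<Rightarrow> real) \<Rightarrow> real mat" where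
  "Mff N E \<theta> px py phi =
     mat (3 * (N - 2)) (3 * (N - 2)) (\<lambda>(r,c). Mhat N E \<theta> px py phi $$ (r + 6, c + 6))"

definition dual_entry_path :: "nat \<Rightarrow> (nat \<times> nat) set" where
  "dual_entry_path l =
     (if l = 1 then {(1,3),(2,3)}
      else {(1,3),(2,l+2)} \<union> {(r,r+1) | r. 3 \<le> r \<and> r < l + 2} \<union> {(r+1,r) | r. 3 \<le> r \<and> r < l + 2})"

end

theory Submission
  imports Defs
begin



definition zc :: "real \<Rightarrow> (nat\<Rightarrow>real) \<Rightarrow> (nat\<Rightarrow>real) \<Rightarrow> (nat\<Rightarrow>real) \<Rightarrow> nat \<Rightarrow> nat \<Rightarrow> real" where
  "zc \<theta> px py phi a v = (if a = 0 then rot_px \<theta> px py v else if a = 1 then rot_py \<theta> px py v else phi v)"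

lemma wdiag_zc: "wdiag \<theta> px py phi u v a = zc \<theta> px py phi a u - zc \<theta> px py phi a v"
  by (simp add: wdiag_def zc_def)

definition vtx :: "nat \<Rightarrow> nat \<Rightarrow> nat" where
  "vtx l k = (if k = 0 then 1 else if k = l + 1 then 2 else k + 2)"

lemma in_E:
  assumes "1 \<le> m" "m \<le> l"
  shows "((i, m+2) \<in> dual_entry_path l) \<longleftrightarrow> (i = vtx l (m-1) \<or> i = vtx l (m+1))"
  using assms unfolding dual_entry_path_def vtx_def by auto

lemma trip_set:
  assumes "1 \<le> m" "m \<le> l"
  shows "{(i,j). (i,j,m+2) \<in> triples (l+2) (dual_entry_path l)} =
     {(min (vtx l (m-1)) (vtx l (m+1)), max (vtx l (m-1)) (vtx l (m+1)))}"
proof -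
  have d: "vtx l (m-1) \<noteq> vtx l (m+1)" "vtx l (m-1) \<in> {1..l+2}" "vtx l (m+1) \<in> {1..l+2}"
    using assms unfolding vtx_def by auto
  show ?thesis using d in_E[OF assms] assms unfolding triples_def
    by (auto simp: min_def max_def)
qed




definition II :: "nat \<Rightarrow> nat \<Rightarrow> nat \<Rightarrow> nat \<Rightarrow> real" where
  "II l a k c = (if 1 \<le> k \<and> k \<le> l \<and> c = 3*(k-1)+a then 1 else 0)"

definition rho :: "nat \<Rightarrow> nat \<Rightarrow> real" where
  "rho l m = (if 2 \<le> l \<and> m = l then -1 else 1)"

definition ZZ where "ZZ \<theta> px py phi l a k = zc \<theta> px py phi a (vtx l k)"

lemma ind_II:
  assumes "k \<le> l+1" "a < 3"
  shows "(if 3*(vtx l k - 1)+a = c+6 then (1::real) else 0) = II l a k c"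
  using assms unfolding vtx_def II_def by auto

lemma blk_unit:
  assumes "1 \<le> u" "u \<le> N" "a < 3" "j < 3*N"
  shows "blk (unit_vec (3*N) j) u a = (if 3*(u-1)+a = j then 1 else 0)"
  using assms unfolding blk_def by (subst index_unit_vec) auto

lemma vtx_range: "k \<le> l+1 \<Longrightarrow> 1 \<le> vtx l k \<and> vtx l k \<le> l+2"
  unfolding vtx_def by auto

lemma Mff_entry:
  assumes m: "1 \<le> m" "m \<le> l" and a: "a < 3" and c: "c < 3*l"
  shows "Mff (l+2) (dual_entry_path l) \<theta> px py phi $$ (3*(m-1)+a, c) =
     rho l m * ((ZZ \<theta> px py phi l a (m+1) - ZZ \<theta> px py phi l a m) * (II l a (m-1) c - II l a m c)
             + (ZZ \<theta> px py phi l a m - ZZ \<theta> px py phi l a (m-1)) * (II l a (m+1) c - II l a m c))"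
proof -
  let ?r = "3*(m-1)+a"
  let ?N = "l+2"
  let ?E = "dual_entry_path l"
  let ?x = "unit_vec (3*?N) (c+6)"
  have r: "?r < 3*l" using m a by auto
  have rr: "?r + 6 = a + 3*(m+1)" using m by auto
  have k: "(?r+6) div 3 + 1 = m+2" "(?r+6) mod 3 = a" unfolding rr using m a by presburger+
  have e1: "Mff ?N ?E \<theta> px py phi $$ (?r, c) = Mhat ?N ?E \<theta> px py phi $$ (?r+6, c+6)"
    unfolding Mff_def using r c by simp
  have e2: "Mhat ?N ?E \<theta> px py phi $$ (?r+6, c+6) = Mhat_apply ?N ?E \<theta> px py phi ?x $ (?r+6)"
    unfolding Mhat_def using r c by simp
  define i where "i = min (vtx l (m-1)) (vtx l (m+1))"
  define j where "j = max (vtx l (m-1)) (vtx l (m+1))"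
  let ?w = "wdiag \<theta> px py phi"
  have e3: "Mhat_apply ?N ?E \<theta> px py phi ?x $ (?r+6) =
      ?w j (m+2) a * (blk ?x i a - blk ?x (m+2) a) + ?w (m+2) i a * (blk ?x j a - blk ?x (m+2) a)"
    unfolding Mhat_apply_def using r k trip_set[OF m] unfolding i_def j_def by (simp add: Let_def)
  have ij: "(i = vtx l (m-1) \<and> j = vtx l (m+1)) \<or> (i = vtx l (m+1) \<and> j = vtx l (m-1))"
    unfolding i_def j_def by (auto simp: min_def max_def)
  have rv: "1 \<le> vtx l (m-1) \<and> vtx l (m-1) \<le> l+2" "1 \<le> vtx l (m+1) \<and> vtx l (m+1) \<le> l+2"
    using vtx_range m by auto
  have bm: "blk ?x (m+2) a = II l a m c"
    using blk_unit[of "m+2" ?N a "c+6"] m a c ind_II[of m l a c] by (simp add: vtx_def split: if_splits)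
  have b1: "blk ?x (vtx l (m-1)) a = II l a (m-1) c"
    using blk_unit[of "vtx l (m-1)" ?N a "c+6"] rv ind_II[of "m-1" l a c] m a c by simp
  have b2: "blk ?x (vtx l (m+1)) a = II l a (m+1) c"
    using blk_unit[of "vtx l (m+1)" ?N a "c+6"] rv ind_II[of "m+1" l a c] m a c by simp
  have zm: "zc \<theta> px py phi a (m+2) = ZZ \<theta> px py phi l a m"
    unfolding ZZ_def vtx_def using m by auto
  have order: "(i = vtx l (m-1)) \<longleftrightarrow> rho l m = 1"
    unfolding i_def rho_def vtx_def using m by (auto simp: min_def)
  show ?thesis
    unfolding e1 e2 e3 wdiag_zc
    using ij order b1 b2 bm zm
    apply (elim disjE)
     apply (auto simp: ZZ_def rho_def algebra_simps split: if_splits)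
    done
qed




definition PP :: "nat \<Rightarrow> nat \<Rightarrow> 'b::zero vec \<Rightarrow> nat \<Rightarrow> 'b" where
  "PP l a v k = (if 1 \<le> k \<and> k \<le> l then v $ (3*(k-1)+a) else 0)"

lemma sum_II:
  fixes v :: "'b::real_field vec"
  assumes "a < 3"
  shows "(\<Sum>c<3*l. of_real (II l a k c) * v $ c) = PP l a v k"
proof (cases "1 \<le> k \<and> k \<le> l")
  case True
  note T = this
  have T1: "Suc 0 \<le> k" "k \<le> l" using T by auto
  have "(\<Sum>c<3*l. of_real (II l a k c) * v $ c) = (\<Sum>c<3*l. if c = 3*(k-1)+a then v $ c else 0)"
    by (rule sum.cong) (auto simp: II_def T1)
  also have "\<dots> = v $ (3*(k-1)+a)" using T assms by (auto simp: sum.delta')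
  finally show ?thesis using T by (simp add: PP_def)
next
  case False
  then have "\<And>c. II l a k c = 0" by (auto simp: II_def)
  then show ?thesis using False by (auto simp: PP_def)
qed

lemma row_action:
  fixes v :: "'b::real_field vec"
  assumes m: "1 \<le> m" "m \<le> l" and a: "a < 3" and v: "v \<in> carrier_vec (3*l)"
  shows "(map_mat of_real (Mff (l+2) (dual_entry_path l) \<theta> px py phi) *\<^sub>v v) $ (3*(m-1)+a) =
     of_real (rho l m) * (of_real (ZZ \<theta> px py phi l a (m+1) - ZZ \<theta> px py phi l a m) * (PP l a v (m-1) - PP l a v m)
             + of_real (ZZ \<theta> px py phi l a m - ZZ \<theta> px py phi l a (m-1)) * (PP l a v (m+1) - PP l a v m))"
proof -
  let ?M = "Mff (l+2) (dual_entry_path l) \<theta> px py phi"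
  let ?r = "3*(m-1)+a"
  let ?A = "ZZ \<theta> px py phi l a (m+1) - ZZ \<theta> px py phi l a m"
  let ?B = "ZZ \<theta> px py phi l a m - ZZ \<theta> px py phi l a (m-1)"
  have r: "?r < 3*l" using m a by auto
  have dimM: "dim_row ?M = 3*l" "dim_col ?M = 3*l" unfolding Mff_def by auto
  have "(map_mat of_real ?M *\<^sub>v v) $ ?r = (\<Sum>c<3*l. of_real (?M $$ (?r, c)) * v $ c)"
    using r v dimM unfolding mult_mat_vec_def scalar_prod_def
    by (simp add: atLeast0LessThan)
  also have "\<dots> = (\<Sum>c<3*l. of_real (rho l m * ?A) * (of_real (II l a (m-1) c) * v $ c)
       + of_real (rho l m * ?B) * (of_real (II l a (m+1) c) * v $ c)
       - of_real (rho l m * (?A + ?B)) * (of_real (II l a m c) * v $ c))"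
    by (rule sum.cong, simp, subst Mff_entry[OF m a], simp, simp add: algebra_simps)
  also have "\<dots> = of_real (rho l m * ?A) * PP l a v (m-1) + of_real (rho l m * ?B) * PP l a v (m+1)
       - of_real (rho l m * (?A + ?B)) * PP l a v m"
    by (simp add: sum.distrib sum_subtractf sum_distrib_left[symmetric] sum_II[OF a])
  finally show ?thesis by (simp add: algebra_simps)
qed




lemma gersh:
  fixes W :: "nat \<Rightarrow> complex" and a b c :: "nat \<Rightarrow> real"
  assumes e: "\<epsilon> > 0" and h: "\<eta> > 0"
    and W0: "W 0 = 0" and Wl: "W (l+1) = 0" and nz: "\<exists>k\<in>{1..l}. W k \<noteq> 0"
    and eq: "\<forall>k\<in>{1..l}. lam * W k = of_real (\<epsilon>^k) * (of_real (a k) * W (k-1) + of_real (b k) * W k + of_real (c k) * W (k+1))"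
    and dom: "\<forall>k\<in>{1..l}. \<bar>a k\<bar> * \<eta> + \<bar>c k\<bar> / \<eta> < b k"
  shows "Re lam > 0"
proof -
  define g where "g k = cmod (W k) * \<eta>^k" for k
  have fin: "finite {1..l}" and ne: "{1..l} \<noteq> {}" using nz by auto
  obtain k where k: "k \<in> {1..l}" and kmax: "\<forall>j\<in>{1..l}. g j \<le> g k"
    using Max_in[OF finite_imageI[OF fin, of g]] ne Max_ge[OF finite_imageI[OF fin, of g]]
    by (metis (no_types, lifting) empty_is_image imageE image_eqI)
  obtain k1 where k1: "k1 \<in> {1..l}" "W k1 \<noteq> 0" using nz by auto
  have "g k1 > 0" using k1 h unfolding g_def by auto
  then have gk: "g k > 0" using kmax k1 by force
  then have Wk: "cmod (W k) > 0" using h unfolding g_def by (auto simp: zero_less_mult_iff)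
  have hk: "\<eta>^k > 0" using h by simp
  have lo: "cmod (W (k-1)) \<le> \<eta> * cmod (W k)"
  proof (cases "k-1 \<in> {1..l}")
    case True
    then have "g (k-1) \<le> g k" using kmax by auto
    moreover have "\<eta>^k = \<eta>^(k-1) * \<eta>" using k by (metis One_nat_def Suc_pred atLeastAtMost_iff le_less_trans less_one linorder_not_less power_Suc2)
    ultimately have "cmod (W (k-1)) * \<eta>^(k-1) \<le> (\<eta> * cmod (W k)) * \<eta>^(k-1)"
      unfolding g_def by (simp add: algebra_simps)
    then show ?thesis using h by (simp add: mult_le_cancel_right)
  next
    case False
    then have "k - 1 = 0" using k by auto
    then show ?thesis using W0 h by simp
  qed
  have hi: "cmod (W (k+1)) \<le> cmod (W k) / \<eta>"
  proof (cases "k+1 \<in> {1..l}")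
    case True
    then have "g (k+1) \<le> g k" using kmax by auto
    then have "cmod (W (k+1)) * \<eta> * \<eta>^k \<le> cmod (W k) * \<eta>^k"
      unfolding g_def by (simp add: algebra_simps)
    then have "cmod (W (k+1)) * \<eta> \<le> cmod (W k)" using hk by (simp add: mult_le_cancel_right)
    then show ?thesis using h by (simp add: field_simps)
  next
    case False
    then have "k = l" using k by auto
    then show ?thesis using Wl h by simp
  qed
  define mu where "mu = lam / of_real (\<epsilon>^k)"
  have ek: "\<epsilon>^k > 0" using e by simp
  have "mu * W k = of_real (a k) * W (k-1) + of_real (b k) * W k + of_real (c k) * W (k+1)"
  proof -
    have ekc: "(of_real (\<epsilon>^k)::complex) \<noteq> 0" using e by simp
    have "lam * W k = of_real (\<epsilon>^k) * (of_real (a k) * W (k-1) + of_real (b k) * W k + of_real (c k) * W (k+1))"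
      using eq k by blast
    then show ?thesis unfolding mu_def using ekc
      by (metis (no_types, lifting) mult.commute nonzero_mult_div_cancel_left times_divide_eq_right)
  qed
  then have "(mu - of_real (b k)) * W k = of_real (a k) * W (k-1) + of_real (c k) * W (k+1)"
    by (simp add: algebra_simps)
  then have "cmod (mu - of_real (b k)) * cmod (W k) \<le> \<bar>a k\<bar> * cmod (W (k-1)) + \<bar>c k\<bar> * cmod (W (k+1))"
    by (metis norm_mult norm_of_real norm_triangle_ineq order_trans_rules(23))
  also have "\<dots> \<le> \<bar>a k\<bar> * (\<eta> * cmod (W k)) + \<bar>c k\<bar> * (cmod (W k) / \<eta>)"
    using lo hi by (intro add_mono mult_left_mono) auto
  also have "\<dots> = (\<bar>a k\<bar> * \<eta> + \<bar>c k\<bar> / \<eta>) * cmod (W k)" by (simp add: algebra_simps)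
  finally have "cmod (mu - of_real (b k)) \<le> \<bar>a k\<bar> * \<eta> + \<bar>c k\<bar> / \<eta>"
    using Wk by (simp add: mult_le_cancel_right)
  moreover have "\<bar>a k\<bar> * \<eta> + \<bar>c k\<bar> / \<eta> < b k" using dom k by blast
  ultimately have "cmod (mu - of_real (b k)) < b k" by linarith
  moreover have "Re mu - b k \<ge> - cmod (mu - of_real (b k))"
    using abs_Re_le_cmod[of "mu - of_real (b k)"] by auto
  ultimately have "Re mu > 0" by linarith
  then show ?thesis unfolding mu_def using ek e by (auto simp: Re_divide_of_real zero_less_divide_iff)
qed




definition FF :: "(nat \<Rightarrow> real) \<Rightarrow> (nat \<Rightarrow> 'b::real_field) \<Rightarrow> nat \<Rightarrow> 'b" where
  "FF Z P m = of_real (Z (m+1) - Z m) * (P (m-1) - P m) + of_real (Z m - Z (m-1)) * (P (m+1) - P m)"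

lemma FF_W:
  fixes P :: "nat \<Rightarrow> 'b::real_field"
  assumes "k \<ge> 1"
  shows "of_real (Z k - Z 0) * FF Z P k =
     of_real (Z (k+1) - Z k) * (of_real (Z k - Z 0) * P (k-1) - of_real (Z (k-1) - Z 0) * P k)
   - of_real (Z k - Z (k-1)) * (of_real (Z (k+1) - Z 0) * P k - of_real (Z k - Z 0) * P (k+1))"
  unfolding FF_def by (simp add: algebra_simps of_real_def)

lemma FF_1:
  fixes P :: "nat \<Rightarrow> 'b::real_field"
  assumes "P 0 = 0"
  shows "FF Z P 1 = - (of_real (Z 2 - Z 0) * P 1 - of_real (Z 1 - Z 0) * P 2)"
  unfolding FF_def using assms by (simp add: algebra_simps of_real_def numeral_2_eq_2)

lemma lin2: "(of_real C::'b::real_field) * (of_real p * X - of_real q * Y) = of_real (C*p) * X - of_real (C*q) * Y"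
  by (simp add: algebra_simps)

lemma path_eig:
  fixes Z :: "nat \<Rightarrow> real"
  assumes l: "l \<ge> 1" and hZ: "Z (l+1) \<noteq> Z 0"
    and hd: "\<forall>m. 2 \<le> m \<and> m \<le> l \<longrightarrow> Z m \<noteq> Z (m-1)"
    and hy: "\<forall>m. 2 \<le> m \<and> m \<le> l \<longrightarrow> Z m \<noteq> Z 0"
  shows "\<exists>\<delta>::nat\<Rightarrow>real. \<forall>lam (P::nat\<Rightarrow>complex). P 0 = 0 \<longrightarrow> P (l+1) = 0 \<longrightarrow> (\<exists>k\<in>{1..l}. P k \<noteq> 0)
      \<longrightarrow> (\<forall>m\<in>{1..l}. lam * P m = of_real (\<delta> m) * FF Z P m) \<longrightarrow> Re lam > 0"
proof -
  define y where "y k = Z k - Z 0" for k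
  define d where "d k = Z k - Z (k-1)" for k
  have y0: "y 0 = 0" unfolding y_def by simp
  have ynz: "y k \<noteq> 0" if "2 \<le> k" "k \<le> l+1" for k
    using that hZ hy unfolding y_def by (cases "k = l+1") auto
  have dnz: "d k \<noteq> 0" if "2 \<le> k" "k \<le> l" for k
    using that hd unfolding d_def by auto
  define \<alpha> where "\<alpha> k = (if k = 1 then 0 else d (k+1) / d k)" for k
  define \<beta> where "\<beta> k = (if k < l then y k * d (k+2) / (y (k+2) * d (k+1)) else 0)" for k
  define \<gamma> where "\<gamma> k = (if k < l then y k / y (k+2) else 0)" for k
  define K where "K = 1 + (\<Sum>k\<in>{1..l}. \<bar>\<alpha> k\<bar> + \<bar>\<beta> k\<bar> + \<bar>\<gamma> k\<bar>)"
  have Kb: "\<bar>\<alpha> k\<bar> \<le> K \<and> \<bar>\<beta> k\<bar> \<le> K \<and> \<bar>\<gamma> k\<bar> \<le> K" if "k \<in> {1..l}" for k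
  proof -
    have "\<bar>\<alpha> k\<bar> + \<bar>\<beta> k\<bar> + \<bar>\<gamma> k\<bar> \<le> (\<Sum>k\<in>{1..l}. \<bar>\<alpha> k\<bar> + \<bar>\<beta> k\<bar> + \<bar>\<gamma> k\<bar>)"
      using that by (intro member_le_sum) auto
    then show ?thesis unfolding K_def by auto
  qed
  have "(\<Sum>k\<in>{1..l}. \<bar>\<alpha> k\<bar> + \<bar>\<beta> k\<bar> + \<bar>\<gamma> k\<bar>) \<ge> 0" by (rule sum_nonneg) simp
  then have K1: "K \<ge> 1" unfolding K_def by simp
  define \<eta> where "\<eta> = 1 / (3*K)"
  define \<epsilon> where "\<epsilon> = 1 / (9*K^2)"
  have hpos: "\<eta> > 0" "\<epsilon> > 0" unfolding \<eta>_def \<epsilon>_def using K1 by auto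
  define \<delta> where "\<delta> k = (if k = 1 then - \<epsilon> / y 2 else - (\<epsilon>^k) * y k / (y (k+1) * d k))" for k
  define a where "a k = - \<alpha> k" for k
  define b where "b k = 1 + \<epsilon> * \<beta> k" for k
  define c where "c k = - \<epsilon> * \<gamma> k" for k
  have dom: "\<forall>k\<in>{1..l}. \<bar>a k\<bar> * \<eta> + \<bar>c k\<bar> / \<eta> < b k"
  proof
    fix k assume k: "k \<in> {1..l}"
    have Kp: "K > 0" using K1 by simp
    have hb: "x / (3*K) \<le> 1/3" if "x \<le> K" for x
      using that Kp by (simp add: field_simps)
    have t1: "\<bar>a k\<bar> * \<eta> \<le> 1/3"
    proof -
      have "\<bar>a k\<bar> * \<eta> = \<bar>\<alpha> k\<bar> / (3*K)" unfolding a_def \<eta>_def by simp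
      then show ?thesis using hb Kb[OF k] by simp
    qed
    have t2: "\<bar>c k\<bar> / \<eta> \<le> 1/3"
    proof -
      have "\<bar>c k\<bar> / \<eta> = \<bar>\<gamma> k\<bar> * \<epsilon> * (3*K)" unfolding c_def \<eta>_def using hpos by (simp add: abs_mult)
      also have "\<dots> = \<bar>\<gamma> k\<bar> / (3*K)" unfolding \<epsilon>_def using Kp by (simp add: power2_eq_square field_simps)
      finally show ?thesis using hb Kb[OF k] by simp
    qed
    have t3: "\<epsilon> * \<bar>\<beta> k\<bar> \<le> 1/9"
    proof -
      have "\<epsilon> * \<bar>\<beta> k\<bar> = (\<bar>\<beta> k\<bar> / (3*K)) / (3*K)" unfolding \<epsilon>_def using Kp by (simp add: power2_eq_square field_simps)
      also have "\<dots> \<le> (1/3) / (3*K)" using hb Kb[OF k] Kp by (intro divide_right_mono) auto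
      also have "\<dots> \<le> (1/3) / 3" using K1 by (intro divide_left_mono) auto
      finally show ?thesis by simp
    qed
    have "- (\<epsilon> * \<bar>\<beta> k\<bar>) \<le> \<epsilon> * \<beta> k" 
    proof -
      have "- \<bar>\<beta> k\<bar> \<le> \<beta> k" by simp
      then have "\<epsilon> * (- \<bar>\<beta> k\<bar>) \<le> \<epsilon> * \<beta> k" using hpos by (intro mult_left_mono) auto
      then show ?thesis by simp
    qed
    then show "\<bar>a k\<bar> * \<eta> + \<bar>c k\<bar> / \<eta> < b k" using t1 t2 t3 unfolding b_def by linarith
  qed
  show ?thesis
  proof (intro exI allI impI)
    fix lam and P :: "nat \<Rightarrow> complex"
    assume P0: "P 0 = 0" and Pl: "P (l+1) = 0" and nz: "\<exists>k\<in>{1..l}. P k \<noteq> 0"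
      and eq: "\<forall>m\<in>{1..l}. lam * P m = of_real (\<delta> m) * FF Z P m"
    define W where "W k = (if k \<le> l then of_real (y (k+1)) * P k - of_real (y k) * P (k+1) else 0)" for k
    have Wf: "W j = of_real (y (j+1)) * P j - of_real (y j) * P (j+1)" if "j \<le> l" for j
      unfolding W_def using that by simp
    have W0: "W 0 = 0" unfolding W_def using y0 P0 by simp
    have Wl: "W (l+1) = 0" unfolding W_def by simp
    have Wnz: "\<exists>k\<in>{1..l}. W k \<noteq> 0"
    proof (rule ccontr)
      assume "\<not> ?thesis"
      then have Wz: "\<forall>k\<in>{1..l}. W k = 0" by auto
      have "P (l - j) = 0" if "j < l" for j
        using that
      proof (induction j)
        case 0
        have "W l = of_real (y (l+1)) * P l" unfolding W_def using Pl by simp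
        then show ?case using Wz l ynz[of "l+1"] by auto
      next
        case (Suc j)
        have e: "l - j = (l - Suc j) + 1" using Suc.prems by auto
        have "W (l - Suc j) = of_real (y (l - j)) * P (l - Suc j) - of_real (y (l - Suc j)) * P (l - j)"
          unfolding W_def using e by simp
        moreover have "P (l - j) = 0" using Suc by auto
        moreover have "W (l - Suc j) = 0" using Wz Suc.prems by auto
        moreover have "y (l - j) \<noteq> 0" using ynz[of "l-j"] Suc.prems by auto
        ultimately show ?case by simp
      qed
      have "P k = 0" if "k \<in> {1..l}" for k
      proof -
        have "l - k < l" "l - (l - k) = k" using that by auto
        then show ?thesis using \<open>\<And>j. j < l \<Longrightarrow> P (l - j) = 0\<close>[of "l-k"] by simp
      qed
      then show False using nz by blast
    qed
    have eig: "\<forall>k\<in>{1..l}. lam * W k = of_real (\<epsilon>^k) * (of_real (a k) * W (k-1) + of_real (b k) * W k + of_real (c k) * W (k+1))"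
    proof
      fix k assume k: "k \<in> {1..l}"
      have E1: "lam * W k = of_real (y (k+1)) * (lam * P k) - of_real (y k) * (lam * P (k+1))"
        unfolding W_def using k by (simp add: algebra_simps)
      have T1: "of_real (y (k+1)) * (lam * P k) = of_real (\<epsilon>^k) * (W k - of_real (\<alpha> k) * W (k-1))"
      proof (cases "k = 1")
        case True
        have F1: "FF Z P 1 = - W 1" using FF_1[of P Z, OF P0] l unfolding W_def y_def by (simp add: numeral_2_eq_2)
        have y2: "y 2 \<noteq> 0" using ynz[of 2] l by simp
        have "lam * P 1 = of_real (\<delta> 1) * FF Z P 1" using eq l by auto
        then have "lam * P 1 = of_real (- \<epsilon> / y 2) * (- W 1)" using F1 unfolding \<delta>_def by simp
        then have "of_real (y (k+1)) * (lam * P k) = of_real (y 2) * (of_real (- \<epsilon> / y 2) * (- W 1))"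
          using True by (simp add: numeral_2_eq_2)
        also have "\<dots> = of_real (y 2 * (- \<epsilon> / y 2) * (-1)) * W 1" by (simp add: of_real_def)
        also have "\<dots> = of_real \<epsilon> * W 1" using y2 by simp
        finally show ?thesis using True unfolding \<alpha>_def by simp
      next
        case False
        then have k2: "2 \<le> k" "k \<le> l" using k by auto
        have FFk: "of_real (y k) * FF Z P k = of_real (d (k+1)) * W (k-1) - of_real (d k) * W k"
        proof -
          have "k - 1 \<le> l" "k - 1 + 1 = k" using k2 by auto
          then show ?thesis using FF_W[of k Z P] k2 Wf[of k] Wf[of "k-1"] unfolding y_def d_def by simp
        qed
        have yk: "y k \<noteq> 0" "y (k+1) \<noteq> 0" using ynz k2 by auto
        have dk: "d k \<noteq> 0" using dnz k2 by auto
        have r: "y (k+1) * \<delta> k = (- (\<epsilon>^k) / d k) * y k" unfolding \<delta>_def using False yk dk by (simp add: field_simps)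
        have "of_real (y (k+1)) * (lam * P k) = of_real (y (k+1) * \<delta> k) * FF Z P k"
          using eq k by simp
        also have "\<dots> = of_real (- (\<epsilon>^k) / d k) * (of_real (y k) * FF Z P k)" unfolding r by simp
        also have "\<dots> = of_real (- (\<epsilon>^k) / d k * d (k+1)) * W (k-1) - of_real (- (\<epsilon>^k) / d k * d k) * W k"
          unfolding FFk by (simp add: algebra_simps)
        also have "\<dots> = of_real (\<epsilon>^k) * (W k - of_real (\<alpha> k) * W (k-1))"
          using dk False unfolding \<alpha>_def by (simp add: algebra_simps)
        finally show ?thesis .
      qed
      have T2: "of_real (y k) * (lam * P (k+1)) = of_real (\<epsilon>^k) * (- of_real (\<epsilon> * \<beta> k) * W k + of_real (\<epsilon> * \<gamma> k) * W (k+1))"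
      proof (cases "k < l")
        case False
        then have "k = l" using k by auto
        then show ?thesis using Pl unfolding \<beta>_def \<gamma>_def by simp
      next
        case True
        have k1: "1 \<le> k+1" "k+1 \<le> l" using True k by auto
        have FFk: "of_real (y (k+1)) * FF Z P (k+1) = of_real (d (k+2)) * W k - of_real (d (k+1)) * W (k+1)"
        proof -
          have "k + 1 + 1 = k + 2" by simp
          then show ?thesis using FF_W[of "k+1" Z P] k1 Wf[of k] Wf[of "k+1"] unfolding y_def d_def by (simp add: numeral_2_eq_2)
        qed
        have yk: "y (k+1) \<noteq> 0" "y (k+2) \<noteq> 0" using ynz k1 k by auto
        have dk: "d (k+1) \<noteq> 0" using dnz k1 k by auto
        have r: "y k * \<delta> (k+1) = (- (\<epsilon>^(k+1)) * y k / (y (k+2) * d (k+1))) * y (k+1)"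
          unfolding \<delta>_def using k yk dk by (simp add: field_simps numeral_2_eq_2)
        have "of_real (y k) * (lam * P (k+1)) = of_real (y k * \<delta> (k+1)) * FF Z P (k+1)"
          using eq k1 by simp
        also have "\<dots> = of_real (- (\<epsilon>^(k+1)) * y k / (y (k+2) * d (k+1))) * (of_real (y (k+1)) * FF Z P (k+1))"
          unfolding r by simp
        also have "\<dots> = of_real (- (\<epsilon>^(k+1)) * y k / (y (k+2) * d (k+1)) * d (k+2)) * W k
            - of_real (- (\<epsilon>^(k+1)) * y k / (y (k+2) * d (k+1)) * d (k+1)) * W (k+1)"
          unfolding FFk by (rule lin2)
        also have "\<dots> = of_real (\<epsilon>^k * (- (\<epsilon> * \<beta> k))) * W k - of_real (- (\<epsilon>^k * (\<epsilon> * \<gamma> k))) * W (k+1)"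
        proof -
          have c1: "(- (\<epsilon>^(k+1)) * y k / (y (k+2) * d (k+1)) * d (k+2)) = \<epsilon>^k * (- (\<epsilon> * \<beta> k))"
            using True dk yk unfolding \<beta>_def by (simp add: field_simps)
          have c2: "(- (\<epsilon>^(k+1)) * y k / (y (k+2) * d (k+1)) * d (k+1)) = - (\<epsilon>^k * (\<epsilon> * \<gamma> k))"
            using True dk yk unfolding \<gamma>_def by (simp add: field_simps)
          show ?thesis unfolding c1 c2 ..
        qed
        also have "\<dots> = of_real (\<epsilon>^k) * (- of_real (\<epsilon> * \<beta> k) * W k + of_real (\<epsilon> * \<gamma> k) * W (k+1))"
          by (simp add: algebra_simps)
        finally show ?thesis .
      qed
      show "lam * W k = of_real (\<epsilon>^k) * (of_real (a k) * W (k-1) + of_real (b k) * W k + of_real (c k) * W (k+1))"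
        unfolding E1 T1 T2 a_def b_def c_def by (simp add: algebra_simps)
    qed
    show "Re lam > 0" by (rule gersh[OF hpos(2) hpos(1) W0 Wl Wnz eig dom])
  qed
qed




lemma FF_real: "FF Z (P::nat\<Rightarrow>real) m = (Z (m+1) - Z m) * (P (m-1) - P m) + (Z m - Z (m-1)) * (P (m+1) - P m)"
  unfolding FF_def by simp

lemma path_ker:
  fixes Z P :: "nat \<Rightarrow> real"
  assumes l: "l \<ge> 1" and hZ: "Z (l+1) \<noteq> Z 0"
    and hd: "\<forall>m. 2 \<le> m \<and> m \<le> l \<longrightarrow> Z m \<noteq> Z (m-1)"
    and P0: "P 0 = 0" and Pl: "P (l+1) = 0" and F: "\<forall>m\<in>{1..l}. FF Z P m = 0"
  shows "\<forall>k\<in>{1..l}. P k = 0"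
proof (cases "l = 1")
  case True
  have "FF Z P 1 = 0" using F True by auto
  then have "(Z 2 - Z 0) * P 1 = 0" using P0 Pl True unfolding FF_real by (auto simp: algebra_simps numeral_2_eq_2)
  moreover have "Z 2 \<noteq> Z 0" using hZ True by (simp add: numeral_2_eq_2)
  ultimately have "P 1 = 0" by simp
  then show ?thesis using True by auto
next
  case False
  then have l2: "l \<ge> 2" using l by auto
  define t where "t = (P 2 - P 1) / (Z 2 - Z 1)"
  have z21: "Z 2 \<noteq> Z 1" using hd l2 by (metis diff_add_inverse2 le_refl nat_1_add_1)
  have main: "P k = t * (Z k - Z 0)" if "k \<le> l+1" for k
    using that
  proof (induction k rule: less_induct)
    case (less k)
    have c1: "P 1 = t * (Z 1 - Z 0)"
    proof -
      have "FF Z P 1 = 0" using F l by auto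
      then have "(Z 2 - Z 1) * (0 - P 1) + (Z 1 - Z 0) * (P 2 - P 1) = 0"
        using P0 unfolding FF_real by (simp add: numeral_2_eq_2)
      moreover have "P 2 - P 1 = t * (Z 2 - Z 1)" unfolding t_def using z21 by simp
      moreover have "(Z 2 - Z 1) * (t * (Z 1 - Z 0) - P 1) = (Z 2 - Z 1) * (0 - P 1) + (Z 1 - Z 0) * (t * (Z 2 - Z 1))"
        by (simp add: algebra_simps)
      ultimately have "(Z 2 - Z 1) * (t * (Z 1 - Z 0) - P 1) = 0" by simp
      then show ?thesis using z21 by simp
    qed
    show ?case
    proof (cases "k \<le> 2")
      case True
      then consider "k = 0" | "k = 1" | "k = 2" by linarith
      then show ?thesis
      proof cases
        case 1 then show ?thesis using P0 by simp
      next
        case 2 then show ?thesis using c1 by simp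
      next
        case 3
        have "P 2 - P 1 = t * (Z 2 - Z 1)" unfolding t_def using z21 by simp
        then show ?thesis using c1 3 by (simp add: algebra_simps)
      qed
    next
      case False
      define m where "m = k - 1"
      have m: "2 \<le> m" "m \<le> l" "k = m + 1" using False less.prems unfolding m_def by auto
      have ih1: "P m = t * (Z m - Z 0)" using less.IH[of m] m by auto
      have ih2: "P (m-1) = t * (Z (m-1) - Z 0)" using less.IH[of "m-1"] m by auto
      have "FF Z P m = 0" using F m by auto
      then have "(Z (m+1) - Z m) * (P (m-1) - P m) + (Z m - Z (m-1)) * (P (m+1) - P m) = 0"
        unfolding FF_real .
      then have "(Z m - Z (m-1)) * (P (m+1) - t * (Z (m+1) - Z 0)) = 0"
        unfolding ih1 ih2 by (simp add: algebra_simps)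
      then show ?thesis using hd m by simp
    qed
  qed
  have "t * (Z (l+1) - Z 0) = 0" using main[of "l+1"] Pl by simp
  then have "t = 0" using hZ by simp
  then show ?thesis using main by auto
qed

lemma path_rker:
  fixes Z :: "nat \<Rightarrow> real"
  assumes l: "l \<ge> 1" and hZ: "Z (l+1) = Z 0"
  shows "\<exists>P::nat\<Rightarrow>real. P 0 = 0 \<and> P (l+1) = 0 \<and> (\<exists>k\<in>{1..l}. P k \<noteq> 0) \<and> (\<forall>m\<in>{1..l}. FF Z P m = 0)"
proof (cases "\<exists>k\<in>{1..l}. Z k \<noteq> Z 0")
  case True
  define P where "P k = (if 1 \<le> k \<and> k \<le> l then Z k - Z 0 else 0)" for k
  have P': "P k = Z k - Z 0" if "k \<le> l+1" for k
  proof -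
    have "k = 0 \<or> k = l+1 \<or> k \<in> {1..l}" using that by auto
    then consider "k = 0" | "k = l+1" | "k \<in> {1..l}" by blast
    then show ?thesis using hZ l unfolding P_def by cases auto
  qed
  have "FF Z P m = 0" if "m \<in> {1..l}" for m
  proof -
    have p: "P (m-1) = Z (m-1) - Z 0" "P m = Z m - Z 0" "P (m+1) = Z (m+1) - Z 0"
      using that P'[of "m-1"] P'[of m] P'[of "m+1"] by auto
    show ?thesis unfolding FF_real p by (simp add: algebra_simps)
  qed
  moreover have "\<exists>k\<in>{1..l}. P k \<noteq> 0" using True unfolding P_def by auto
  moreover have "P 0 = 0" "P (l+1) = 0" unfolding P_def by auto
  ultimately show ?thesis by blast
next
  case False
  then have Zc: "Z k = Z 0" if "k \<le> l+1" for k
  proof -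
    have "k = 0 \<or> k = l+1 \<or> k \<in> {1..l}" using that by auto
    then consider "k = 0" | "k = l+1" | "k \<in> {1..l}" by blast
    then show ?thesis using hZ False by cases auto
  qed
  define P where "P k = (if k = 1 then 1 else 0::real)" for k :: nat
  have "FF Z P m = 0" if "m \<in> {1..l}" for m
    using that Zc[of "m-1"] Zc[of m] Zc[of "m+1"] unfolding FF_real by auto
  moreover have "P 0 = 0" "P (l+1) = 0" "P 1 \<noteq> 0" unfolding P_def using l by auto
  ultimately show ?thesis using l by force
qed

definition RR :: "(nat \<Rightarrow> real) \<Rightarrow> (nat \<Rightarrow> real) \<Rightarrow> nat \<Rightarrow> real" where
  "RR Z I j = (Z (j+1) - Z j) * (I (j-1) - I j) + (Z j - Z (j-1)) * (I (j+1) - I j)"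

lemma path_lker:
  fixes Z :: "nat \<Rightarrow> real" and r1 r2 :: real
  assumes "Z m = Z (m-1)" "r1 * r1 = 1" "r2 * r2 = 1" "m \<ge> 2"
  shows "\<exists>\<alpha> \<beta>. (\<alpha> \<noteq> 0 \<or> \<beta> \<noteq> 0) \<and> (\<forall>I. \<alpha> * (r1 * RR Z I (m-1)) + \<beta> * (r2 * RR Z I m) = 0)"
proof (cases "Z (m+1) - Z m = 0 \<and> Z (m-1) - Z (m-2) = 0")
  case True
  have R0: "RR Z I m = 0" for I using True assms unfolding RR_def by simp
  show ?thesis by (rule exI[of _ 0], rule exI[of _ 1]) (simp add: R0)
next
  case False
  have mm: "m - 1 - 1 = m - 2" "m - 1 + 1 = m" using assms by auto
  define A where "A = r1 * (Z (m+1) - Z m)"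
  define B where "B = r2 * (Z (m-1) - Z (m-2))"
  have nz: "A \<noteq> 0 \<or> B \<noteq> 0" using False assms unfolding A_def B_def by auto
  have z: "A * (r1 * RR Z I (m-1)) + B * (r2 * RR Z I m) = 0" for I
  proof -
    have "A * (r1 * RR Z I (m-1)) = (r1 * r1) * ((Z (m+1) - Z m) * RR Z I (m-1))" unfolding A_def by (simp add: algebra_simps)
    moreover have "B * (r2 * RR Z I m) = (r2 * r2) * ((Z (m-1) - Z (m-2)) * RR Z I m)" unfolding B_def by (simp add: algebra_simps)
    ultimately show ?thesis
      using assms unfolding RR_def mm by (simp add: algebra_simps)
  qed
  show ?thesis using nz z by blast
qed




lemma inv_det:
  fixes A :: "'a::field mat"
  assumes A: "A \<in> carrier_mat n n"
  shows "invertible_mat A \<longleftrightarrow> det A \<noteq> 0"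
proof
  assume "invertible_mat A"
  then obtain B where AB: "A * B = 1\<^sub>m (dim_row A)" and BA: "B * A = 1\<^sub>m (dim_row B)"
    unfolding invertible_mat_def inverts_mat_def by auto
  have "dim_row B = n"
    using arg_cong[OF BA, of dim_col] A by auto
  moreover have "dim_col B = n"
    using arg_cong[OF AB, of dim_col] A by auto
  ultimately have B: "B \<in> carrier_mat n n" by auto
  have "det A * det B = 1" using det_mult[OF A B] AB A by simp
  then show "det A \<noteq> 0" by auto
next
  assume "det A \<noteq> 0"
  from det_non_zero_imp_unit[OF A this, of "()"]
  obtain B where B: "B \<in> carrier_mat n n" and "B * A = 1\<^sub>m n" "A * B = 1\<^sub>m n"
    unfolding Units_def ring_mat_def by auto
  then show "invertible_mat A" using A
    unfolding invertible_mat_def inverts_mat_def square_mat.simps by auto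
qed

lemma wprod_zc: "wprod \<theta> px py phi u v = (\<Prod>a<3. zc \<theta> px py phi a u - zc \<theta> px py phi a v)"
  unfolding wprod_def zc_def by (simp add: numeral_3_eq_3 lessThan_Suc)

lemma wprod_nz: "wprod \<theta> px py phi u v \<noteq> 0 \<longleftrightarrow> (\<forall>a<3. zc \<theta> px py phi a u \<noteq> zc \<theta> px py phi a v)"
  unfolding wprod_zc by (auto simp: prod_zero_iff)

lemma Mff_carrier: "Mff (l+2) E \<theta> px py phi \<in> carrier_mat (3*l) (3*l)"
  unfolding Mff_def by auto

lemma idx:
  fixes r l :: nat
  assumes "r < 3*l"
  shows "r = 3*((r div 3 + 1) - 1) + r mod 3" "1 \<le> r div 3 + 1" "r div 3 + 1 \<le> l" "r mod 3 < 3"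
  using assms by auto

lemma PP_simps:
  "PP l a v 0 = 0" "PP l a v (l+1) = 0"
  "r < 3*l \<Longrightarrow> PP l (r mod 3) v (r div 3 + 1) = v $ r"
  unfolding PP_def by auto

lemma vec_nz:
  assumes "v \<in> carrier_vec n" "v \<noteq> 0\<^sub>v n"
  shows "\<exists>r<n. v $ r \<noteq> 0"
  using assms by (metis carrier_vecD eq_vecI index_zero_vec(1) index_zero_vec(2))

lemma row_FF:
  fixes v :: "'b::real_field vec"
  assumes m: "1 \<le> m" "m \<le> l" and a: "a < 3" and v: "v \<in> carrier_vec (3*l)"
  shows "(map_mat of_real (Mff (l+2) (dual_entry_path l) \<theta> px py phi) *\<^sub>v v) $ (3*(m-1)+a) =
     of_real (rho l m) * FF (ZZ \<theta> px py phi l a) (PP l a v) m"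
  unfolding row_action[OF assms] FF_def by simp

lemma rho_sq: "rho l m * rho l m = 1" unfolding rho_def by auto

lemma map_of_real_id: "map_mat (of_real :: real \<Rightarrow> real) A = A"
  by (intro eq_matI) auto

lemma FF_cong:
  assumes "\<And>k. k \<le> l+1 \<Longrightarrow> P k = Q k" "m \<le> l"
  shows "FF Z P m = FF Z Q m"
  unfolding FF_def using assms by simp

lemma ZZ_simps:
  "ZZ \<theta> px py phi l a 0 = zc \<theta> px py phi a 1"
  "ZZ \<theta> px py phi l a (l+1) = zc \<theta> px py phi a 2"
  "1 \<le> m \<Longrightarrow> m \<le> l \<Longrightarrow> ZZ \<theta> px py phi l a m = zc \<theta> px py phi a (m+2)"
  unfolding ZZ_def vtx_def by auto




lemma kernel_trivial:
  assumes l: "l \<ge> 1"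
    and hZ: "\<forall>a<3. ZZ \<theta> px py phi l a (l+1) \<noteq> ZZ \<theta> px py phi l a 0"
    and hd: "\<forall>a<3. \<forall>m. 2 \<le> m \<and> m \<le> l \<longrightarrow> ZZ \<theta> px py phi l a m \<noteq> ZZ \<theta> px py phi l a (m-1)"
  shows "det (Mff (l+2) (dual_entry_path l) \<theta> px py phi) \<noteq> 0"
proof
  let ?M = "Mff (l+2) (dual_entry_path l) \<theta> px py phi"
  assume "det ?M = 0"
  then obtain v where v: "v \<in> carrier_vec (3*l)" "v \<noteq> 0\<^sub>v (3*l)" "?M *\<^sub>v v = 0\<^sub>v (3*l)"
    using det_0_iff_vec_prod_zero_field[OF Mff_carrier] by blast
  obtain r where r: "r < 3*l" "v $ r \<noteq> 0" using vec_nz[OF v(1,2)] by auto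
  define a where "a = r mod 3"
  define m0 where "m0 = r div 3 + 1"
  have a: "a < 3" unfolding a_def by simp
  have F: "\<forall>m\<in>{1..l}. FF (ZZ \<theta> px py phi l a) (PP l a v) m = 0"
  proof
    fix m assume m: "m \<in> {1..l}"
    have i: "3*(m-1)+a < 3*l" using m a by auto
    have "(?M *\<^sub>v v) $ (3*(m-1)+a) = rho l m * FF (ZZ \<theta> px py phi l a) (PP l a v) m"
      using row_FF[of m l a v \<theta> px py phi] m a v(1) unfolding map_of_real_id by simp
    moreover have "(?M *\<^sub>v v) $ (3*(m-1)+a) = 0" using v(3) i by simp
    moreover have "rho l m \<noteq> 0" unfolding rho_def by simp
    ultimately show "FF (ZZ \<theta> px py phi l a) (PP l a v) m = 0" by simp
  qed
  have "\<forall>k\<in>{1..l}. PP l a v k = 0"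
    by (rule path_ker[OF l _ _ PP_simps(1) PP_simps(2) F]) (use hZ hd a in auto)
  moreover have "m0 \<in> {1..l}" using r unfolding m0_def by auto
  moreover have "PP l a v m0 = v $ r" using PP_simps(3)[OF r(1)] unfolding a_def m0_def .
  ultimately show False using r by auto
qed

lemma singular_A:
  assumes l: "l \<ge> 1" and a: "a < 3"
    and hZ: "ZZ \<theta> px py phi l a (l+1) = ZZ \<theta> px py phi l a 0"
  shows "det (Mff (l+2) (dual_entry_path l) \<theta> px py phi) = 0"
proof -
  let ?M = "Mff (l+2) (dual_entry_path l) \<theta> px py phi"
  obtain P :: "nat \<Rightarrow> real" where P: "P 0 = 0" "P (l+1) = 0" "\<exists>k\<in>{1..l}. P k \<noteq> 0"
      "\<forall>m\<in>{1..l}. FF (ZZ \<theta> px py phi l a) P m = 0"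
    using path_rker[OF l hZ] by blast
  define v where "v = vec (3*l) (\<lambda>r. if r mod 3 = a then P (r div 3 + 1) else 0)"
  have vc: "v \<in> carrier_vec (3*l)" unfolding v_def by simp
  obtain k where k: "k \<in> {1..l}" "P k \<noteq> 0" using P(3) by auto
  have "v $ (3*(k-1)+a) = P k" unfolding v_def using k a by auto
  moreover have "3*(k-1)+a < 3*l" using k a by auto
  ultimately have vnz: "v \<noteq> 0\<^sub>v (3*l)" using k by auto
  have "?M *\<^sub>v v = 0\<^sub>v (3*l)"
  proof (rule eq_vecI)
    show "dim_vec (?M *\<^sub>v v) = dim_vec (0\<^sub>v (3*l))" using Mff_carrier[of l "dual_entry_path l" \<theta> px py phi] by (simp add: carrier_matD)
    fix r assume "r < dim_vec (0\<^sub>v (3*l))"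
    then have r: "r < 3*l" by simp
    define a' where "a' = r mod 3"
    define m where "m = r div 3 + 1"
    have m: "1 \<le> m" "m \<le> l" "a' < 3" "r = 3*(m-1)+a'" using idx[OF r] unfolding m_def a'_def by auto
    have "(?M *\<^sub>v v) $ r = rho l m * FF (ZZ \<theta> px py phi l a') (PP l a' v) m"
      using row_FF[of m l a' v \<theta> px py phi] m vc unfolding map_of_real_id by simp
    also have "FF (ZZ \<theta> px py phi l a') (PP l a' v) m = 0"
    proof (cases "a' = a")
      case True
      have "PP l a' v k = P k" if "k \<le> l+1" for k
      proof -
        have "k = 0 \<or> k = l+1 \<or> k \<in> {1..l}" using that by auto
        moreover have "v $ (3*(k-1)+a) = P k" if "k \<in> {1..l}" using that a unfolding v_def by auto
        ultimately show ?thesis using P(1,2) True unfolding PP_def by auto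
      qed
      then have "FF (ZZ \<theta> px py phi l a') (PP l a' v) m = FF (ZZ \<theta> px py phi l a') P m"
        by (intro FF_cong) (use m in auto)
      then show ?thesis using P(4) m True by auto
    next
      case False
      have "PP l a' v k = 0" for k
        unfolding PP_def v_def using False m(3) by auto
      then show ?thesis unfolding FF_def by simp
    qed
    finally show "(?M *\<^sub>v v) $ r = 0\<^sub>v (3*l) $ r" using r by simp
  qed
  then show ?thesis using det_0_iff_vec_prod_zero_field[OF Mff_carrier] vc vnz by blast
qed

lemma singular_B:
  assumes l: "l \<ge> 1" and a: "a < 3" and m: "2 \<le> m" "m \<le> l"
    and hd: "ZZ \<theta> px py phi l a m = ZZ \<theta> px py phi l a (m-1)"
  shows "det (Mff (l+2) (dual_entry_path l) \<theta> px py phi) = 0"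
proof -
  let ?M = "Mff (l+2) (dual_entry_path l) \<theta> px py phi"
  let ?Z = "ZZ \<theta> px py phi l a"
  have Mc: "?M \<in> carrier_mat (3*l) (3*l)" by (rule Mff_carrier)
  obtain \<alpha> \<beta> where ab: "\<alpha> \<noteq> 0 \<or> \<beta> \<noteq> 0"
    "\<forall>I. \<alpha> * (rho l (m-1) * RR ?Z I (m-1)) + \<beta> * (rho l m * RR ?Z I m) = 0"
    using path_lker[OF hd rho_sq rho_sq m(1)] by blast
  define i1 where "i1 = 3*((m-1)-1)+a"
  define i2 where "i2 = 3*(m-1)+a"
  have i: "i1 < 3*l" "i2 < 3*l" "i1 \<noteq> i2" unfolding i1_def i2_def using m a by auto
  define u where "u = vec (3*l) (\<lambda>i. (if i = i1 then \<alpha> else 0) + (if i = i2 then \<beta> else 0))"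
  have uc: "u \<in> carrier_vec (3*l)" unfolding u_def by simp
  have "u $ i1 = \<alpha>" "u $ i2 = \<beta>" unfolding u_def using i by auto
  then have unz: "u \<noteq> 0\<^sub>v (3*l)" using ab(1) i by auto
  have ent: "?M $$ (3*(j-1)+a, c) = rho l j * RR ?Z (\<lambda>k. II l a k c) j" if "1 \<le> j" "j \<le> l" "c < 3*l" for j c
    unfolding Mff_entry[OF that(1,2) a that(3)] RR_def ZZ_def by simp
  have "transpose_mat ?M *\<^sub>v u = 0\<^sub>v (3*l)"
  proof (rule eq_vecI)
    show "dim_vec (transpose_mat ?M *\<^sub>v u) = dim_vec (0\<^sub>v (3*l))" using Mc by simp
    fix c assume "c < dim_vec (0\<^sub>v (3*l))"
    then have c: "c < 3*l" by simp
    have "(transpose_mat ?M *\<^sub>v u) $ c = (\<Sum>i<3*l. ?M $$ (i, c) * u $ i)"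
      using c uc Mc unfolding mult_mat_vec_def scalar_prod_def by (simp add: atLeast0LessThan)
    also have "\<dots> = (\<Sum>i<3*l. (if i = i1 then ?M $$ (i, c) * \<alpha> else 0) + (if i = i2 then ?M $$ (i, c) * \<beta> else 0))"
      by (rule sum.cong) (auto simp: u_def algebra_simps)
    also have "\<dots> = ?M $$ (i1, c) * \<alpha> + ?M $$ (i2, c) * \<beta>"
      using i by (simp add: sum.distrib)
    also have "\<dots> = \<alpha> * (rho l (m-1) * RR ?Z (\<lambda>k. II l a k c) (m-1)) + \<beta> * (rho l m * RR ?Z (\<lambda>k. II l a k c) m)"
      unfolding i1_def i2_def using ent[of "m-1" c] ent[of m c] m c by simp
    also have "\<dots> = 0" using ab(2) by blast
    finally show "(transpose_mat ?M *\<^sub>v u) $ c = 0\<^sub>v (3*l) $ c" using c by simp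
  qed
  then have "det (transpose_mat ?M) = 0"
    using det_0_iff_vec_prod_zero_field[of "transpose_mat ?M" "3*l"] Mc uc unz by auto
  then show ?thesis using det_transpose[OF Mc] by simp
qed




lemma diag_row:
  fixes v :: "complex vec" and M :: "real mat"
  assumes M: "M \<in> carrier_mat n n" and v: "v \<in> carrier_vec n" and r: "r < n"
  shows "(map_mat of_real (mat n n (\<lambda>(i,j). if i = j then dd i else 0) * M) *\<^sub>v v) $ r
       = of_real (dd r) * (map_mat of_real M *\<^sub>v v) $ r"
proof -
  let ?D = "mat n n (\<lambda>(i,j). if i = j then dd i else (0::real))"
  have DM: "(?D * M) $$ (r, c) = dd r * M $$ (r, c)" if "c < n" for c
  proof -
    have "(?D * M) $$ (r, c) = (\<Sum>k<n. ?D $$ (r,k) * M $$ (k,c))"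
      using that r M unfolding index_mult_mat(1)[of r ?D c M] by (simp add: scalar_prod_def atLeast0LessThan)
    also have "\<dots> = (\<Sum>k<n. if k = r then dd r * M $$ (k,c) else 0)"
      by (rule sum.cong) (auto simp: r)
    also have "\<dots> = dd r * M $$ (r, c)" using r by simp
    finally show ?thesis .
  qed
  have "(map_mat of_real (?D * M) *\<^sub>v v) $ r = (\<Sum>c<n. of_real ((?D * M) $$ (r, c)) * v $ c)"
    using r v M unfolding mult_mat_vec_def scalar_prod_def by (simp add: atLeast0LessThan)
  also have "\<dots> = (\<Sum>c<n. of_real (dd r) * (of_real (M $$ (r, c)) * v $ c))"
    by (rule sum.cong) (auto simp: DM)
  also have "\<dots> = of_real (dd r) * (\<Sum>c<n. of_real (M $$ (r, c)) * v $ c)"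
    by (simp add: sum_distrib_left)
  also have "(\<Sum>c<n. of_real (M $$ (r, c)) * v $ c) = (map_mat of_real M *\<^sub>v v) $ r"
    using r v M unfolding mult_mat_vec_def scalar_prod_def by (simp add: atLeast0LessThan)
  finally show ?thesis .
qed

lemma part2:
  assumes l: "l \<ge> 1"
    and hZ: "\<forall>a<3. ZZ \<theta> px py phi l a (l+1) \<noteq> ZZ \<theta> px py phi l a 0"
    and hd: "\<forall>a<3. \<forall>m. 2 \<le> m \<and> m \<le> l \<longrightarrow> ZZ \<theta> px py phi l a m \<noteq> ZZ \<theta> px py phi l a (m-1)"
    and hy: "\<forall>a<3. \<forall>m. 2 \<le> m \<and> m \<le> l \<longrightarrow> ZZ \<theta> px py phi l a m \<noteq> ZZ \<theta> px py phi l a 0"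
  shows "\<exists>D :: real mat. D \<in> carrier_mat (3 * l) (3 * l) \<and> diagonal_mat D \<and>
            (\<forall>ev. eigenvalue (map_mat complex_of_real (D * Mff (l+2) (dual_entry_path l) \<theta> px py phi)) ev \<longrightarrow> Re ev > 0)"
proof -
  let ?M = "Mff (l+2) (dual_entry_path l) \<theta> px py phi"
  have Mc: "?M \<in> carrier_mat (3*l) (3*l)" by (rule Mff_carrier)
  have "\<forall>a. \<exists>\<delta>::nat\<Rightarrow>real. a < 3 \<longrightarrow> (\<forall>lam (P::nat\<Rightarrow>complex). P 0 = 0 \<longrightarrow> P (l+1) = 0 \<longrightarrow> (\<exists>k\<in>{1..l}. P k \<noteq> 0)
      \<longrightarrow> (\<forall>m\<in>{1..l}. lam * P m = of_real (\<delta> m) * FF (ZZ \<theta> px py phi l a) P m) \<longrightarrow> Re lam > 0)"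
  proof
    fix a
    show "\<exists>\<delta>::nat\<Rightarrow>real. a < 3 \<longrightarrow> (\<forall>lam (P::nat\<Rightarrow>complex). P 0 = 0 \<longrightarrow> P (l+1) = 0 \<longrightarrow> (\<exists>k\<in>{1..l}. P k \<noteq> 0)
      \<longrightarrow> (\<forall>m\<in>{1..l}. lam * P m = of_real (\<delta> m) * FF (ZZ \<theta> px py phi l a) P m) \<longrightarrow> Re lam > 0)"
    proof (cases "a < 3")
      case True
      then show ?thesis using path_eig[OF l, of "ZZ \<theta> px py phi l a"] hZ hd hy by blast
    qed auto
  qed
  then obtain \<delta>s where \<delta>s: "\<forall>a. a < 3 \<longrightarrow> (\<forall>lam (P::nat\<Rightarrow>complex). P 0 = 0 \<longrightarrow> P (l+1) = 0 \<longrightarrow> (\<exists>k\<in>{1..l}. P k \<noteq> 0)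
      \<longrightarrow> (\<forall>m\<in>{1..l}. lam * P m = of_real (\<delta>s a m) * FF (ZZ \<theta> px py phi l a) P m) \<longrightarrow> Re lam > 0)"
    by metis
  define dd where "dd r = rho l (r div 3 + 1) * \<delta>s (r mod 3) (r div 3 + 1)" for r
  define D where "D = mat (3*l) (3*l) (\<lambda>(i,j). if i = j then dd i else (0::real))"
  have Dc: "D \<in> carrier_mat (3*l) (3*l)" unfolding D_def by simp
  have Dd: "diagonal_mat D" unfolding D_def diagonal_mat_def by auto
  have ev: "Re ev > 0" if e: "eigenvalue (map_mat complex_of_real (D * ?M)) ev" for ev
  proof -
    let ?N = "map_mat complex_of_real (D * ?M)"
    obtain v where v: "v \<in> carrier_vec (3*l)" "v \<noteq> 0\<^sub>v (3*l)" "?N *\<^sub>v v = ev \<cdot>\<^sub>v v"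
      using e Dc Mc unfolding eigenvalue_def eigenvector_def by auto
    obtain r where r: "r < 3*l" "v $ r \<noteq> 0" using vec_nz[OF v(1,2)] by auto
    define a where "a = r mod 3"
    define m0 where "m0 = r div 3 + 1"
    have a: "a < 3" unfolding a_def by simp
    have eqs: "\<forall>m\<in>{1..l}. ev * PP l a v m = of_real (\<delta>s a m) * FF (ZZ \<theta> px py phi l a) (PP l a v) m"
    proof
      fix m assume m: "m \<in> {1..l}"
      define i where "i = 3*(m-1)+a"
      have i: "i < 3*l" "i div 3 + 1 = m" "i mod 3 = a" unfolding i_def using m a by auto
      have sv: "(ev \<cdot>\<^sub>v v) $ i = ev * v $ i" using i(1) v(1) by simp
      have "ev * PP l a v m = (?N *\<^sub>v v) $ i"
        unfolding v(3) sv using m unfolding PP_def i_def by simp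
      also have "\<dots> = of_real (dd i) * (map_mat of_real ?M *\<^sub>v v) $ i"
        unfolding D_def by (rule diag_row[OF Mc v(1) i(1)])
      also have "\<dots> = of_real (dd i) * (of_real (rho l m) * FF (ZZ \<theta> px py phi l a) (PP l a v) m)"
        using row_FF[of m l a v \<theta> px py phi] m a v(1) unfolding i_def by simp
      also have "\<dots> = of_real (dd i * rho l m) * FF (ZZ \<theta> px py phi l a) (PP l a v) m"
        by simp
      also have "dd i * rho l m = \<delta>s a m" unfolding dd_def i
        by (metis mult.commute mult.left_neutral mult.assoc rho_sq)
      finally show "ev * PP l a v m = of_real (\<delta>s a m) * FF (ZZ \<theta> px py phi l a) (PP l a v) m" .
    qed
    have "m0 \<in> {1..l}" using r unfolding m0_def by auto
    moreover have "PP l a v m0 = v $ r" using PP_simps(3)[OF r(1)] unfolding a_def m0_def .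
    ultimately have nz: "\<exists>k\<in>{1..l}. PP l a v k \<noteq> 0" using r(2) by metis
    show ?thesis using \<delta>s a PP_simps(1,2) nz eqs by blast
  qed
  show ?thesis using Dc Dd ev by blast
qed




theorem lemma8:
  fixes l :: nat and \<theta> :: real and px py phi :: "nat \<Rightarrow> real"
  assumes "l \<ge> 1"
  defines "E \<equiv> dual_entry_path l"
  defines "M \<equiv> Mff (l + 2) E \<theta> px py phi"
  defines "cond \<equiv> wprod \<theta> px py phi 1 2 \<noteq> 0 \<and>
                   (\<forall>r. 3 \<le> r \<and> r < l + 2 \<longrightarrow> wprod \<theta> px py phi r (r + 1) \<noteq> 0)"
  shows "(invertible_mat M \<longleftrightarrow> cond)
     \<and> (cond \<and> (\<forall>k. 4 \<le> k \<and> k \<le> l + 2 \<longrightarrow> wprod \<theta> px py phi 1 k \<noteq> 0) \<longrightarrow>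
         (\<exists>D :: real mat. D \<in> carrier_mat (3 * l) (3 * l) \<and> diagonal_mat D \<and>
            (\<forall>ev. eigenvalue (map_mat complex_of_real (D * M)) ev \<longrightarrow> Re ev > 0)))"
proof -
  note l = assms(1)
  have Mc: "M \<in> carrier_mat (3*l) (3*l)" unfolding M_def by (rule Mff_carrier)
  have c1: "wprod \<theta> px py phi 1 2 \<noteq> 0 \<longleftrightarrow> (\<forall>a<3. ZZ \<theta> px py phi l a (l+1) \<noteq> ZZ \<theta> px py phi l a 0)"
    unfolding wprod_nz ZZ_simps by auto
  have c2: "(\<forall>r. 3 \<le> r \<and> r < l + 2 \<longrightarrow> wprod \<theta> px py phi r (r + 1) \<noteq> 0) \<longleftrightarrow>
      (\<forall>a<3. \<forall>m. 2 \<le> m \<and> m \<le> l \<longrightarrow> ZZ \<theta> px py phi l a m \<noteq> ZZ \<theta> px py phi l a (m-1))"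
  proof
    assume h: "\<forall>r. 3 \<le> r \<and> r < l + 2 \<longrightarrow> wprod \<theta> px py phi r (r + 1) \<noteq> 0"
    show "\<forall>a<3. \<forall>m. 2 \<le> m \<and> m \<le> l \<longrightarrow> ZZ \<theta> px py phi l a m \<noteq> ZZ \<theta> px py phi l a (m-1)"
    proof (intro allI impI)
      fix a m :: nat assume a: "a < 3" and m: "2 \<le> m \<and> m \<le> l"
      have "wprod \<theta> px py phi (m+1) (m+2) \<noteq> 0" using h[rule_format, of "m+1"] m by simp
      then have "zc \<theta> px py phi a (m+1) \<noteq> zc \<theta> px py phi a (m+2)" using wprod_nz a by blast
      moreover have "ZZ \<theta> px py phi l a m = zc \<theta> px py phi a (m+2)" using ZZ_simps(3) m by auto
      moreover have "ZZ \<theta> px py phi l a (m-1) = zc \<theta> px py phi a (m+1)"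
        using ZZ_simps(3)[of "m-1" l \<theta> px py phi a] m by auto
      ultimately show "ZZ \<theta> px py phi l a m \<noteq> ZZ \<theta> px py phi l a (m-1)" by simp
    qed
  next
    assume h: "\<forall>a<3. \<forall>m. 2 \<le> m \<and> m \<le> l \<longrightarrow> ZZ \<theta> px py phi l a m \<noteq> ZZ \<theta> px py phi l a (m-1)"
    show "\<forall>r. 3 \<le> r \<and> r < l + 2 \<longrightarrow> wprod \<theta> px py phi r (r + 1) \<noteq> 0"
    proof (intro allI impI)
      fix r :: nat assume r: "3 \<le> r \<and> r < l + 2"
      define m where "m = r - 1"
      have m: "2 \<le> m" "m \<le> l" "r = m + 1" using r unfolding m_def by auto
      have "ZZ \<theta> px py phi l a m = zc \<theta> px py phi a (m+2)" for a using ZZ_simps(3) m by auto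
      moreover have "ZZ \<theta> px py phi l a (m-1) = zc \<theta> px py phi a (m+1)" for a
        using ZZ_simps(3)[of "m-1" l \<theta> px py phi a] m by auto
      ultimately have "\<forall>a<3. zc \<theta> px py phi a r \<noteq> zc \<theta> px py phi a (r+1)"
      proof (intro allI impI)
        fix a :: nat assume a: "a < 3"
        have "ZZ \<theta> px py phi l a m \<noteq> ZZ \<theta> px py phi l a (m-1)" using h a m by blast
        then show "zc \<theta> px py phi a r \<noteq> zc \<theta> px py phi a (r+1)"
          using \<open>\<And>a. ZZ \<theta> px py phi l a m = zc \<theta> px py phi a (m+2)\<close>[of a]
            \<open>\<And>a. ZZ \<theta> px py phi l a (m-1) = zc \<theta> px py phi a (m+1)\<close>[of a] m(3)
          by (simp add: numeral_2_eq_2)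
      qed
      then show "wprod \<theta> px py phi r (r + 1) \<noteq> 0" using wprod_nz by blast
    qed
  qed
  have c3: "(\<forall>k. 4 \<le> k \<and> k \<le> l + 2 \<longrightarrow> wprod \<theta> px py phi 1 k \<noteq> 0) \<Longrightarrow>
      (\<forall>a<3. \<forall>m. 2 \<le> m \<and> m \<le> l \<longrightarrow> ZZ \<theta> px py phi l a m \<noteq> ZZ \<theta> px py phi l a 0)"
  proof (intro allI impI)
    fix a m :: nat assume h: "\<forall>k. 4 \<le> k \<and> k \<le> l + 2 \<longrightarrow> wprod \<theta> px py phi 1 k \<noteq> 0"
      and a: "a < 3" and m: "2 \<le> m \<and> m \<le> l"
    have "wprod \<theta> px py phi 1 (m+2) \<noteq> 0" using h m by simp
    then have "zc \<theta> px py phi a 1 \<noteq> zc \<theta> px py phi a (m+2)" using wprod_nz a by blast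
    then show "ZZ \<theta> px py phi l a m \<noteq> ZZ \<theta> px py phi l a 0" using ZZ_simps m by auto
  qed
  have p1: "det M \<noteq> 0 \<longleftrightarrow> cond"
  proof
    assume c: cond
    show "det M \<noteq> 0" unfolding M_def E_def
      by (rule kernel_trivial[OF l]) (use c c1 c2 in \<open>auto simp: cond_def\<close>)
  next
    assume d: "det M \<noteq> 0"
    show cond
    proof (rule ccontr)
      assume "\<not> cond"
      then consider (A) "\<not> (\<forall>a<3. ZZ \<theta> px py phi l a (l+1) \<noteq> ZZ \<theta> px py phi l a 0)"
        | (B) "\<not> (\<forall>a<3. \<forall>m. 2 \<le> m \<and> m \<le> l \<longrightarrow> ZZ \<theta> px py phi l a m \<noteq> ZZ \<theta> px py phi l a (m-1))"
        unfolding cond_def c1 c2 by blast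
      then show False
      proof cases
        case A
        then obtain a where "a < 3" "ZZ \<theta> px py phi l a (l+1) = ZZ \<theta> px py phi l a 0" by auto
        from singular_A[OF l this] d show False unfolding M_def E_def by simp
      next
        case B
        then obtain a m where "a < 3" "2 \<le> m" "m \<le> l" "ZZ \<theta> px py phi l a m = ZZ \<theta> px py phi l a (m-1)" by auto
        from singular_B[OF l this] d show False unfolding M_def E_def by simp
      qed
    qed
  qed
  have part1: "invertible_mat M \<longleftrightarrow> cond" using inv_det[OF Mc] p1 by simp
  have part2': "cond \<and> (\<forall>k. 4 \<le> k \<and> k \<le> l + 2 \<longrightarrow> wprod \<theta> px py phi 1 k \<noteq> 0) \<longrightarrow>
         (\<exists>D :: real mat. D \<in> carrier_mat (3 * l) (3 * l) \<and> diagonal_mat D \<and>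
            (\<forall>ev. eigenvalue (map_mat complex_of_real (D * M)) ev \<longrightarrow> Re ev > 0))"
  proof
    assume h: "cond \<and> (\<forall>k. 4 \<le> k \<and> k \<le> l + 2 \<longrightarrow> wprod \<theta> px py phi 1 k \<noteq> 0)"
    show "\<exists>D :: real mat. D \<in> carrier_mat (3 * l) (3 * l) \<and> diagonal_mat D \<and>
            (\<forall>ev. eigenvalue (map_mat complex_of_real (D * M)) ev \<longrightarrow> Re ev > 0)"
      unfolding M_def E_def
      by (rule part2[OF l]) (use h c1 c2 c3 in \<open>auto simp: cond_def\<close>)
  qed
  show ?thesis using part1 part2' by blast
qed


end
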